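(* Let $2\le r\le n$, and let $A$ and $A+\sum_{i=1}^r\mathbf{x}_i\mathbf{x}_i^{\top}$ both lie in $\mathrm{SGL}_n(\mathbb{F}_2)$, where $\mathbf{x}_1,\ldots,\mathbf{x}_r\in\mathbb{F}_2^n$ are linearly independent and $[\mathbf{x}_i^{\top}A^{-1}\mathbf{x}_j]_{i,j=1}^r$ has rank one and trace zero. Then $d\big(A,A+\sum_{i=1}^r\mathbf{x}_i\mathbf{x}_i^{\top}\big)\ge r+2$.
   Context: $\mathrm{SGL}_n(\mathbb{F}_2)$ is the set of invertible symmetric $n\times n$ matrices over the binary field; $d$ is the graph distance in the graph $\Gamma_n$ on $\mathrm{SGL}_n(\mathbb{F}_2)$ where $A\sim B$ iff $\mathrm{rank}(A-B)=1$. *)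

theory Defs
  imports "HOL-Analysis.Analysis" "HOL-Library.Z2" "HOL-Library.Extended_Nat"
begin

definition SGL :: "(bit^'n^'n) set" where
  "SGL = {A. transpose A = A \<and> invertible A}"

definition sgl_adj :: "bit^'n^'n \<Rightarrow> bit^'n^'n \<Rightarrow> bool" where
  "sgl_adj A B \<longleftrightarrow> A \<in> SGL \<and> B \<in> SGL \<and> rank (A - B) = 1"

definition sgl_walk :: "nat \<Rightarrow> (nat \<Rightarrow> bit^'n^'n) \<Rightarrow> bit^'n^'n \<Rightarrow> bit^'n^'n \<Rightarrow> bool" where
  "sgl_walk k p A B \<longleftrightarrow> p 0 = A \<and> p k = B \<and> (\<forall>i\<le>k. p i \<in> SGL)
     \<and> (\<forall>i<k. sgl_adj (p i) (p (Suc i)))"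

text \<open>Graph distance (infinity if no path).\<close>
definition sgl_dist :: "bit^'n^'n \<Rightarrow> bit^'n^'n \<Rightarrow> enat" where
  "sgl_dist A B = (INF k \<in> {k. \<exists>p. sgl_walk k p A B}. enat k)"

definition outer :: "bit^'n \<Rightarrow> bit^'n^'n" where
  "outer x = (\<chi> a b. x $ a * x $ b)"

end

theory Submission imports Defs begin

declare add_bit_eq_xor[simp del] mult_bit_eq_and[simp del]

definition dotb :: "'a::comm_semiring_1^'n \<Rightarrow> 'a^'n \<Rightarrow> 'a" where
  "dotb u v = (\<Sum>i\<in>UNIV. u$i * v$i)"

lemma bit_sq[simp]: "(b::bit) * b = b" by (cases b) auto
lemma bit_dbl[simp]: "(b::bit) + b = 0" by (cases b) auto
lemma bitv_dbl[simp]: "(v::bit^'n) + v = 0" by (simp add: vec_eq_iff)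
lemma bitm_dbl[simp]: "(v::bit^'n^'m) + v = 0" by (simp add: vec_eq_iff)
lemma bitm_minus: "(a::bit^'n^'m) - b = a + b" by (simp add: vec_eq_iff)
lemma bitv_minus: "(a::bit^'n) - b = a + b" by (simp add: vec_eq_iff)

lemma dotb_comm: "dotb u v = dotb v u" by (simp add: dotb_def mult.commute)
lemma dotb_mv: "dotb u (M *v v) = dotb (u v* M) v"
proof -
  have "(\<Sum>i\<in>UNIV. u$i * (\<Sum>j\<in>UNIV. M$i$j * v$j)) = (\<Sum>i\<in>UNIV. \<Sum>j\<in>UNIV. u$i * M$i$j * v$j)"
    by (simp add: sum_distrib_left mult.assoc)
  also have "\<dots> = (\<Sum>j\<in>UNIV. \<Sum>i\<in>UNIV. u$i * M$i$j * v$j)" by (rule sum.swap)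
  also have "\<dots> = (\<Sum>j\<in>UNIV. (\<Sum>i\<in>UNIV. u$i * M$i$j) * v$j)"
    by (simp add: sum_distrib_right)
  finally show ?thesis by (simp add: dotb_def matrix_vector_mult_def vector_matrix_mult_def)
qed
lemma dotb_scale: "dotb u (c *s v) = c * dotb u v"
  by (simp add: dotb_def sum_distrib_left mult.left_commute)
lemma dotb_add: "dotb u (v + w) = dotb u v + dotb u w"
  by (simp add: dotb_def distrib_left sum.distrib)
lemma dotb_sum: "finite S \<Longrightarrow> dotb u (\<Sum>j\<in>S. f j) = (\<Sum>j\<in>S. dotb u (f j))"
  by (induct S rule: finite_induct) (auto simp: dotb_def distrib_left sum.distrib)
lemma mv_comp: "(M *v v) $ i = dotb (M $ i) v"
  by (simp add: dotb_def matrix_vector_mult_def)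
lemma outer_mv: "outer y *v w = dotb y w *s y"
  by (simp add: outer_def matrix_vector_mult_def dotb_def vec_eq_iff sum_distrib_left sum_distrib_right mult_ac)
lemma sum_mv: "finite S \<Longrightarrow> (\<Sum>j\<in>S. M j) *v w = (\<Sum>j\<in>S. M j *v w)"
  by (induct S rule: finite_induct) (auto simp: matrix_vector_mult_add_rdistrib)
lemma sum_outer: "(\<Sum>i\<in>UNIV. outer (x $ i)) = transpose x ** (x::bit^'n^'r)"
  by (simp add: outer_def transpose_def matrix_matrix_mult_def vec_eq_iff sum_component)
lemma axis_vm: "axis i 1 v* x = x $ i"
  by (simp add: vector_matrix_mult_def axis_def vec_eq_iff if_distrib if_distribR cong: if_cong)
lemma dotb_axis: "dotb (axis i 1) g = g $ i"
  by (simp add: dotb_def axis_def if_distrib if_distribR cong: if_cong)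
lemma outer_transpose: "transpose (outer y) = outer y"
  by (simp add: outer_def transpose_def vec_eq_iff mult.commute)

lemma sym_rank1_outer:
  fixes M :: "bit^'m^'m"
  assumes sym: "transpose M = M" and rk: "rank M = 1"
  shows "\<exists>v. v \<noteq> 0 \<and> M = outer v"
proof -
  obtain B where B: "B \<subseteq> rows M" "vec.independent B" "rows M \<subseteq> vec.span B" "card B = 1"
    using vec.basis_exists[of "rows M"] rk unfolding row_rank_def_gen by metis
  then obtain v where Bv: "B = {v}" by (meson card_1_singletonE)
  have v0: "v \<noteq> 0" using B(2) Bv vec.dependent_zero by blast
  have "\<forall>i. \<exists>c. row i M = c *s v"
  proof
    fix i
    have "row i M \<in> vec.span {v}" using B(3) Bv unfolding rows_def by blast
    then show "\<exists>c. row i M = c *s v" unfolding vec.span_singleton by blast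
  qed
  then obtain c where c: "\<And>i. row i M = c i *s v" by metis
  have Mc: "M $ i $ j = c i * v $ j" for i j
    using arg_cong[OF c[of i], of "\<lambda>w. w $ j"] by (simp add: row_def)
  obtain j0 where j0: "v $ j0 = 1" using v0 by (auto simp: vec_eq_iff)
  have ci: "c i = c j0 * v $ i" for i
  proof -
    have "c i = M $ i $ j0" using Mc j0 by simp
    also have "\<dots> = M $ j0 $ i" using sym by (metis transpose_def vec_lambda_beta)
    finally show ?thesis using Mc by simp
  qed
  have Mc2: "M $ i $ j = c j0 * v $ i * v $ j" for i j
    using Mc[of i j] ci[of i] by simp
  have "c j0 \<noteq> 0"
  proof
    assume "c j0 = 0"
    then have "M = 0" using Mc2 by (simp add: vec_eq_iff)
    then have "rows M = {0}" by (auto simp: rows_def row_def vec_eq_iff)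
    then show False using B(1) Bv v0 by auto
  qed
  then have "c j0 = 1" by simp
  then have "M = outer v" using Mc2 by (simp add: outer_def vec_eq_iff)
  then show ?thesis using v0 by blast
qed

lemma indep_inj_vm:
  fixes x :: "'a::field^'n^'r"
  assumes inj: "inj (\<lambda>i. x $ i)" and ind: "vec.independent (range (\<lambda>i. x $ i))"
    and eq: "a v* x = 0"
  shows "a = 0"
proof (rule ccontr)
  assume "a \<noteq> 0"
  then obtain i where ai: "a $ i \<noteq> 0" by (auto simp: vec_eq_iff)
  let ?X = "range (\<lambda>i. x $ i)"
  define u where "u v = a $ (inv (\<lambda>i. x $ i) v)" for v
  have "(\<Sum>v\<in>?X. u v *s v) = (\<Sum>l\<in>UNIV. u (x $ l) *s x $ l)"
    by (subst sum.reindex[OF inj]) simp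
  also have "\<dots> = (\<Sum>l\<in>UNIV. a $ l *s x $ l)" by (simp add: u_def inv_f_f[OF inj])
  also have "\<dots> = a v* x"
    by (simp add: vector_matrix_mult_def vec_eq_iff sum_component)
  finally have "(\<Sum>v\<in>?X. u v *s v) = 0" using eq by simp
  moreover have "x $ i \<in> ?X" "u (x $ i) \<noteq> 0" using ai by (auto simp: u_def inv_f_f[OF inj])
  ultimately have "vec.dependent ?X" using vec.dependent_finite[of ?X] by auto
  then show False using ind by simp
qed

lemma functional_exists:
  fixes S :: "('a::field^'n) set"
  assumes "vec.independent S"
  shows "\<exists>f. \<forall>v\<in>S. dotb v f = h v"
proof -
  obtain g :: "'a^'n \<Rightarrow> 'a^'n" where g: "Vector_Spaces.linear (*s) (*s) g" "\<forall>v\<in>S. g v = (\<chi> j. h v)"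
    using vec.linear_independent_extend[OF assms, of "\<lambda>v. (\<chi> j. h v)"] by blast
  obtain j0 :: 'n where True by simp
  have "\<forall>v\<in>S. dotb v (matrix g $ j0) = h v"
  proof
    fix v assume "v \<in> S"
    have "dotb v (matrix g $ j0) = (matrix g *v v) $ j0" by (simp add: mv_comp dotb_comm)
    also have "\<dots> = g v $ j0" by (simp add: matrix_works[OF g(1)])
    finally show "dotb v (matrix g $ j0) = h v" using g(2) \<open>v \<in> S\<close> by simp
  qed
  then show ?thesis by blast
qed

lemma mat_add_rdistrib: "((A::'a::semiring_1^'n^'m) + B) ** C = A ** C + B ** C"
  by (simp add: matrix_matrix_mult_def vec_eq_iff distrib_right sum.distrib)
lemma transpose_add2: "transpose ((A::'a::semiring_1^'n^'m) + B) = transpose A + transpose B"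
  by (simp add: transpose_def vec_eq_iff)
lemma mv_scale: "(M::'a::comm_semiring_1^'n^'m) *v (c *s v) = c *s (M *v v)"
  by (simp add: matrix_vector_mult_def vec_eq_iff sum_distrib_left mult_ac)

lemma step_lemma:
  fixes P C :: "bit^'n^'n"
  assumes PC: "P ** C = mat 1" and inv: "invertible (P + outer y)"
  shows "dotb y (C *v y) = 0 \<and> (P + outer y) ** (C + C ** outer y ** C) = mat 1"
proof -
  define s where "s = dotb y (C *v y)"
  have 1: "(P + outer y) *v (C *v y) = y + s *s y"
  proof -
    have "P *v (C *v y) = y" by (simp add: matrix_vector_mul_assoc PC)
    then show ?thesis
      by (simp only: matrix_vector_mult_add_rdistrib outer_mv s_def)
  qed
  have s0: "s = 0"
  proof (rule ccontr)
    assume "s \<noteq> 0"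
    then have "s = 1" by simp
    then have "(P + outer y) *v (C *v y) = (P + outer y) *v 0" using 1 by simp
    then have "C *v y = 0" using inj_matrix_vector_mult[OF inv] by (metis injD)
    then have "y = 0" using PC by (metis matrix_vector_mul_assoc matrix_vector_mul_lid matrix_vector_mult_0_right)
    then have "s = 0" by (simp add: s_def dotb_def)
    then show False using \<open>s = 1\<close> by simp
  qed
  have OCO: "outer y ** C ** outer y = 0"
  proof -
    have "(outer y ** C ** outer y) *v w = 0 *v w" for w
      by (simp flip: matrix_vector_mul_assoc add: outer_mv mv_scale dotb_scale s0[unfolded s_def])
    then show ?thesis using matrix_eq by blast
  qed
  have "(P + outer y) ** (C + C ** outer y ** C)
      = P ** C + (P ** C) ** outer y ** C + outer y ** C + (outer y ** C ** outer y) ** C"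
    by (simp add: mat_add_rdistrib matrix_add_ldistrib matrix_mul_assoc add.assoc)
  also have "\<dots> = mat 1" by (simp add: PC OCO add.assoc)
  finally show ?thesis using s0 s_def by simp
qed

lemma form_step:
  fixes C :: "bit^'n^'n" and x :: "bit^'n^'r"
  assumes F: "\<forall>a b. dotb (a v* x) (C *v (b v* x)) = dotb a g * dotb g b"
    and gc: "dotb g c = 0"
  shows "\<forall>a b. dotb (a v* x) ((C + C ** outer (c v* x) ** C) *v (b v* x)) = dotb a g * dotb g b"
proof (intro allI)
  fix a b
  have "(C + C ** outer (c v* x) ** C) *v (b v* x)
     = C *v (b v* x) + dotb (c v* x) (C *v (b v* x)) *s (C *v (c v* x))"
    by (simp flip: matrix_vector_mul_assoc add: matrix_vector_mult_add_rdistrib outer_mv mv_scale)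
  then have "dotb (a v* x) ((C + C ** outer (c v* x) ** C) *v (b v* x))
     = dotb a g * dotb g b + (dotb c g * dotb g b) * (dotb a g * dotb g c)"
    using F by (simp add: dotb_add dotb_scale mult_ac)
  then show "dotb (a v* x) ((C + C ** outer (c v* x) ** C) *v (b v* x)) = dotb a g * dotb g b"
    using gc by simp
qed

lemma no_short_walk:
  fixes A :: "bit^'n^'n" and x :: "bit^'n^'r"
  assumes A: "A \<in> SGL"
    and inj: "inj (\<lambda>i. x $ i)" and ind: "vec.independent (range (\<lambda>i. x $ i))"
    and rk: "rank (x ** matrix_inv A ** transpose x) = 1"
    and walk: "sgl_walk k p A (A + (\<Sum>i\<in>UNIV. outer (x $ i)))"
  shows "CARD('r) + 2 \<le> k"
proof (rule ccontr)
  assume "\<not> CARD('r) + 2 \<le> k"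
  then have kr: "k \<le> CARD('r) + 1" by simp
  define C0 where "C0 = matrix_inv A"
  have "\<exists>A'. A ** A' = mat 1 \<and> A' ** A = mat 1" using A by (simp add: SGL_def invertible_def)
  then have "A ** C0 = mat 1 \<and> C0 ** A = mat 1" unfolding C0_def matrix_inv_def by (rule someI_ex)
  then have AC: "A ** C0 = mat 1" and CA: "C0 ** A = mat 1" by auto
  have symA: "transpose A = A" using A by (simp add: SGL_def)
  have "transpose C0 ** A = mat 1"
    by (metis AC symA matrix_transpose_mul transpose_mat)
  then have symC: "transpose C0 = C0"
    by (metis AC matrix_mul_assoc matrix_mul_lid matrix_mul_rid)
  define G where "G = x ** C0 ** transpose x"
  have "transpose G = G" unfolding G_def
    by (simp add: matrix_transpose_mul symC matrix_mul_assoc)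
  then obtain g where g0: "g \<noteq> 0" and Gg: "G = outer g"
    using sym_rank1_outer[of G] rk unfolding G_def C0_def by blast
  have form0: "\<forall>a b. dotb (a v* x) (C0 *v (b v* x)) = dotb a g * dotb g b"
  proof (intro allI)
    fix a b
    have "dotb (a v* x) (C0 *v (b v* x)) = dotb a (x *v (C0 *v (transpose x *v b)))"
      by (simp add: dotb_mv)
    also have "\<dots> = dotb a (G *v b)" by (simp only: G_def matrix_vector_mul_assoc matrix_mul_assoc)
    also have "\<dots> = dotb a g * dotb g b" by (simp add: Gg outer_mv dotb_scale mult.commute)
    finally show "dotb (a v* x) (C0 *v (b v* x)) = dotb a g * dotb g b" .
  qed
  from walk have p0: "p 0 = A" and pk: "p k = A + (\<Sum>i\<in>UNIV. outer (x $ i))"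
    and pS: "\<forall>i\<le>k. p i \<in> SGL" and adj: "\<forall>i<k. sgl_adj (p i) (p (Suc i))"
    unfolding sgl_walk_def by auto
  have "\<forall>j. \<exists>v. j < k \<longrightarrow> p (Suc j) = p j + outer v"
  proof (intro allI)
    fix j
    show "\<exists>v. j < k \<longrightarrow> p (Suc j) = p j + outer v"
    proof (cases "j < k")
      case True
      define D where "D = p j - p (Suc j)"
      have r1: "rank D = 1" using adj True by (simp add: sgl_adj_def D_def)
      have "transpose (p j) = p j" "transpose (p (Suc j)) = p (Suc j)"
        using pS True by (auto simp: SGL_def)
      then have "transpose D = D" by (simp add: D_def bitm_minus transpose_add2)
      then obtain v where "D = outer v" using sym_rank1_outer r1 by blast
      moreover have "p (Suc j) = p j + D"
        by (simp add: D_def bitm_minus add.assoc[symmetric])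
      ultimately show ?thesis by blast
    qed simp
  qed
  then obtain y where y: "\<And>j. j < k \<Longrightarrow> p (Suc j) = p j + outer (y j)" by metis
  have tele: "m \<le> k \<Longrightarrow> p m = A + (\<Sum>j<m. outer (y j))" for m
    by (induction m) (auto simp: p0 y add.assoc)
  define N where "N = (\<Sum>i\<in>UNIV. outer (x $ i))"
  have NY: "N = (\<Sum>j<k. outer (y j))" using tele[of k] pk unfolding N_def by simp
  have Nv: "N *v f = (\<Sum>j<k. dotb (y j) f *s y j)" for f
    by (simp add: NY sum_mv outer_mv)
  have Nv2: "N *v f = (x *v f) v* x" for f
    by (simp add: N_def sum_outer flip: matrix_vector_mul_assoc)
  define X where "X = range (\<lambda>i. x $ i)"
  have finX: "finite X" unfolding X_def by simp
  have cardX: "card X = CARD('r)" unfolding X_def using inj by (simp add: card_image)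
  have dimX: "vec.dim X = CARD('r)" using vec.dim_eq_card_independent[OF ind] cardX X_def by simp
  have XinY: "X \<subseteq> vec.span (y ` {..<k})"
  proof
    fix v assume "v \<in> X"
    then obtain i where vi: "v = x $ i" unfolding X_def by auto
    obtain f where f: "\<forall>w\<in>X. dotb w f = (if w = x $ i then 1 else 0)"
      using functional_exists[OF ind, of "\<lambda>w. if w = x $ i then 1 else 0"] unfolding X_def by blast
    have "x *v f = axis i 1"
    proof (subst vec_eq_iff, intro allI)
      fix l
      have "(x *v f) $ l = (if x $ l = x $ i then 1 else 0)" using f by (simp add: mv_comp X_def)
      also have "\<dots> = axis i 1 $ l" using inj by (auto simp: axis_def inj_eq)
      finally show "(x *v f) $ l = axis i 1 $ l" .
    qed
    then have "N *v f = v" using Nv2 by (simp add: axis_vm vi)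
    then have "v = (\<Sum>j<k. dotb (y j) f *s y j)" using Nv by simp
    also have "\<dots> \<in> vec.span (y ` {..<k})"
      by (intro vec.span_sum vec.span_scale vec.span_base) auto
    finally show "v \<in> vec.span (y ` {..<k})" .
  qed
  have yinX: "y j \<in> vec.span X" if jk: "j < k" for j
  proof (rule ccontr)
    assume nin: "y j \<notin> vec.span X"
    have indI: "vec.independent (insert (y j) X)"
      using vec.independent_insertI[OF nin] ind X_def by simp
    obtain f where f: "\<forall>w\<in>insert (y j) X. dotb w f = (if w = y j then 1 else 0)"
      using functional_exists[OF indI, of "\<lambda>w. if w = y j then 1 else 0"] by blast
    have "x *v f = 0"
    proof (subst vec_eq_iff, intro allI)
      fix l
      have "x $ l \<in> X" unfolding X_def by simp
      moreover then have "x $ l \<noteq> y j" using nin vec.span_base by metis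
      ultimately show "(x *v f) $ l = 0 $ l" using f by (simp add: mv_comp)
    qed
    then have "N *v f = 0" using Nv2 by simp
    then have S0: "(\<Sum>i<k. dotb (y i) f *s y i) = 0" using Nv by simp
    define Y' where "Y' = y ` ({..<k} - {j})"
    have "(\<Sum>i<k. dotb (y i) f *s y i) = dotb (y j) f *s y j + (\<Sum>i\<in>{..<k} - {j}. dotb (y i) f *s y i)"
      using jk by (simp add: sum.remove)
    also have "dotb (y j) f = 1" using f by simp
    finally have "y j + (\<Sum>i\<in>{..<k} - {j}. dotb (y i) f *s y i) = 0" using S0 by simp
    then have yj: "y j = (\<Sum>i\<in>{..<k} - {j}. dotb (y i) f *s y i)"
      by (metis add_right_imp_eq bitv_dbl)
    have yjY: "y j \<in> vec.span Y'" unfolding yj Y'_def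
      by (intro vec.span_sum vec.span_scale vec.span_base) auto
    have "y ` {..<k} \<subseteq> vec.span Y'"
    proof
      fix w assume "w \<in> y ` {..<k}"
      then obtain i where "i < k" "w = y i" by auto
      then show "w \<in> vec.span Y'"
        using yjY by (cases "i = j") (auto simp: Y'_def intro: vec.span_base)
    qed
    then have "vec.span (y ` {..<k}) \<subseteq> vec.span Y'"
      using vec.span_mono vec.span_span by metis
    then have XY': "X \<subseteq> vec.span Y'" using XinY by blast
    have "vec.dim (vec.span Y') = vec.dim Y'" by simp
    also have "\<dots> \<le> card Y'" unfolding Y'_def by (rule vec.dim_le_card') simp
    also have "\<dots> \<le> card ({..<k} - {j})" unfolding Y'_def by (rule card_image_le) simp
    also have "\<dots> = k - 1" using jk by simp
    also have "\<dots> \<le> vec.dim X" using kr dimX by simp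
    finally have "vec.span X = vec.span (vec.span Y')"
      using vec.dim_eq_span[OF XY'] by blast
    then have "y j \<in> vec.span X" using yjY vec.span_base by metis
    then show False using nin by simp
  qed
  have "\<forall>j. \<exists>c. j < k \<longrightarrow> y j = c v* x"
  proof (intro allI)
    fix j
    show "\<exists>c. j < k \<longrightarrow> y j = c v* x"
    proof (cases "j < k")
      case True
      then have "y j \<in> vec.span X" by (rule yinX)
      then obtain u where u: "y j = (\<Sum>v\<in>X. u v *s v)" unfolding vec.span_finite[OF finX] by blast
      also have "\<dots> = (\<Sum>l\<in>UNIV. u (x $ l) *s x $ l)"
        unfolding X_def by (subst sum.reindex[OF inj]) simp
      also have "\<dots> = (\<chi> l. u (x $ l)) v* x"
        by (simp add: vector_matrix_mult_def vec_eq_iff sum_component)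
      finally show ?thesis by blast
    qed simp
  qed
  then obtain c where c: "\<And>j. j < k \<Longrightarrow> y j = c j v* x" by metis
  have inv_ind: "m \<le> k \<Longrightarrow> (\<exists>C. p m ** C = mat 1 \<and>
      (\<forall>a b. dotb (a v* x) (C *v (b v* x)) = dotb a g * dotb g b)) \<and> (\<forall>j<m. dotb g (c j) = 0)" for m
  proof (induction m)
    case 0
    then show ?case using AC form0 p0 by auto
  next
    case (Suc m)
    then have mk: "m < k" by simp
    with Suc.IH obtain C where PC: "p m ** C = mat 1"
      and F: "\<forall>a b. dotb (a v* x) (C *v (b v* x)) = dotb a g * dotb g b"
      and G: "\<forall>j<m. dotb g (c j) = 0" by auto
    have inv: "invertible (p m + outer (y m))" using y[OF mk] pS Suc.prems by (auto simp: SGL_def)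
    from step_lemma[OF PC inv] have s0: "dotb (y m) (C *v y m) = 0"
      and PC': "(p m + outer (y m)) ** (C + C ** outer (y m) ** C) = mat 1" by auto
    have "dotb (y m) (C *v y m) = dotb (c m) g * dotb g (c m)" using F c[OF mk] by simp
    then have gc: "dotb g (c m) = 0" using s0 by (simp add: dotb_comm)
    have "p (Suc m) ** (C + C ** outer (y m) ** C) = mat 1" using PC' y[OF mk] by simp
    moreover have "\<forall>a b. dotb (a v* x) ((C + C ** outer (y m) ** C) *v (b v* x)) = dotb a g * dotb g b"
      using form_step[OF F gc] c[OF mk] by simp
    moreover have "\<forall>j<Suc m. dotb g (c j) = 0" using G gc less_Suc_eq by auto
    ultimately show ?case by blast
  qed
  have gcj: "\<And>j. j < k \<Longrightarrow> dotb g (c j) = 0" using inv_ind[of k] by auto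
  obtain i0 where gi0: "g $ i0 = 1" using g0 by (auto simp: vec_eq_iff)
  define a where "a = (axis i0 1 :: bit^'r)"
  have ga: "dotb g a = 1" using gi0 dotb_comm[of g] dotb_axis[of i0 g] by (simp add: a_def)
  define f where "f = C0 *v (a v* x)"
  have "dotb (y j) f = 0" if "j < k" for j
    using form0 c[OF that] gcj[OF that] by (simp add: f_def dotb_comm)
  then have "N *v f = 0" using Nv by simp
  moreover have "x *v f = g"
  proof (subst vec_eq_iff, intro allI)
    fix l
    have "(x *v f) $ l = dotb (axis l 1 v* x) (C0 *v (a v* x))" by (simp add: mv_comp axis_vm f_def)
    also have "\<dots> = g $ l" using form0 ga by (simp add: dotb_axis)
    finally show "(x *v f) $ l = g $ l" .
  qed
  ultimately have "g v* x = 0" using Nv2 by simp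
  then have "g = 0" using indep_inj_vm[OF inj ind] by blast
  then show False using g0 by simp
qed

theorem lemma4p7:
  fixes A :: "bit^'n^'n" and x :: "bit^'n^'r"
  assumes "2 \<le> CARD('r)" and "CARD('r) \<le> CARD('n)"
    and "A \<in> SGL"
    and "A + (\<Sum>i\<in>UNIV. outer (x $ i)) \<in> SGL"
    and "inj (\<lambda>i. x $ i)" and "vec.independent (range (\<lambda>i. x $ i))"
    and "rank (x ** matrix_inv A ** transpose x) = 1"
    and "trace (x ** matrix_inv A ** transpose x) = 0"
  shows "sgl_dist A (A + (\<Sum>i\<in>UNIV. outer (x $ i))) \<ge> enat (CARD('r) + 2)"
  unfolding sgl_dist_def
proof (rule INF_greatest)
  fix k assume "k \<in> {k. \<exists>p. sgl_walk k p A (A + (\<Sum>i\<in>UNIV. outer (x $ i)))}"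
  then obtain p where "sgl_walk k p A (A + (\<Sum>i\<in>UNIV. outer (x $ i)))" by blast
  then have "CARD('r) + 2 \<le> k" using no_short_walk assms(3,5,6,7) by blast
  then show "enat (CARD('r) + 2) \<le> enat k" by simp
qed

end
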